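(* Let $R$ be a commutative Noetherian ring and $\alpha$ an automorphism of $R$ such that $R$ is $\alpha$-special, with $a$ an $\alpha$-special element. Let $S=R[\theta;\alpha]$. Then $(1-a\theta)S$ is a maximal right ideal of $S$. If in addition $\alpha$ has infinite order, then $S/(1-a\theta)S$ is a faithful simple right $S$-module.
   Context: $R[\theta;\alpha]$: skew polynomial ring with $\theta r=\alpha(r)\theta$. An ideal $I$ is $\alpha$-stable if $\alpha(I)=I$. For $a\in R$ and $n\ge1$ put $N_n^\alpha(a)=a\alpha(a)\cdots\alpha^{n-1}(a)$. $R$ is $\alpha$-special if there is $a\in R$ (an $\alpha$-special element) with $N_n^\alpha(a)\neq0$ for all $n\ge1$ and such that every nonzero $\alpha$-stable ideal of $R$ contains $N_n^\alpha(a)$ for some $n\ge1$. *)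

theory Defs
  imports "HOL-Computational_Algebra.Polynomial"
begin

definition r_ideal :: "'a::comm_ring_1 set \<Rightarrow> bool" where
  "r_ideal I \<longleftrightarrow> 0 \<in> I \<and> (\<forall>x\<in>I. \<forall>y\<in>I. x + y \<in> I) \<and> (\<forall>x\<in>I. - x \<in> I)
     \<and> (\<forall>r. \<forall>x\<in>I. r * x \<in> I)"

definition noetherian_ring :: "'a::comm_ring_1 itself \<Rightarrow> bool" where
  "noetherian_ring _ \<longleftrightarrow>
     (\<forall>C :: nat \<Rightarrow> 'a set. (\<forall>n. r_ideal (C n)) \<and> (\<forall>n. C n \<subseteq> C (Suc n))
        \<longrightarrow> (\<exists>N. \<forall>n\<ge>N. C n = C N))"

definition ring_automorphism :: "('a::comm_ring_1 \<Rightarrow> 'a) \<Rightarrow> bool" where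
  "ring_automorphism \<alpha> \<longleftrightarrow> bij \<alpha> \<and> (\<forall>x y. \<alpha> (x + y) = \<alpha> x + \<alpha> y)
     \<and> (\<forall>x y. \<alpha> (x * y) = \<alpha> x * \<alpha> y) \<and> \<alpha> 1 = 1"

definition alpha_stable :: "('a \<Rightarrow> 'a) \<Rightarrow> 'a set \<Rightarrow> bool" where
  "alpha_stable \<alpha> I \<longleftrightarrow> \<alpha> ` I = I"

definition normN :: "('a::comm_ring_1 \<Rightarrow> 'a) \<Rightarrow> nat \<Rightarrow> 'a \<Rightarrow> 'a" where
  "normN \<alpha> n a = (\<Prod>i<n. (\<alpha> ^^ i) a)"

definition alpha_special_element :: "('a::comm_ring_1 \<Rightarrow> 'a) \<Rightarrow> 'a \<Rightarrow> bool" where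
  "alpha_special_element \<alpha> a \<longleftrightarrow>
     (\<forall>n\<ge>1. normN \<alpha> n a \<noteq> 0) \<and>
     (\<forall>I. r_ideal I \<and> alpha_stable \<alpha> I \<and> I \<noteq> {0} \<longrightarrow> (\<exists>n\<ge>1. normN \<alpha> n a \<in> I))"

text \<open>Elements of S are written sum r_i theta^i with left coefficients; as an additive
  group S is the polynomial group 'a poly (coefficient i = r_i), and the multiplication is
  twisted by theta r = alpha(r) theta, i.e. (r theta^i)(s theta^j) = r alpha^i(s) theta^(i+j).\<close>
definition skew_mult :: "('a::comm_ring_1 \<Rightarrow> 'a) \<Rightarrow> 'a poly \<Rightarrow> 'a poly \<Rightarrow> 'a poly" where
  "skew_mult \<alpha> p q =
     (\<Sum>i\<le>degree p. \<Sum>j\<le>degree q. monom (coeff p i * (\<alpha> ^^ i) (coeff q j)) (i + j))"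

definition theta :: "'a::comm_ring_1 poly" where
  "theta = monom 1 1"

definition right_ideal :: "('a::comm_ring_1 \<Rightarrow> 'a) \<Rightarrow> 'a poly set \<Rightarrow> bool" where
  "right_ideal \<alpha> I \<longleftrightarrow> 0 \<in> I \<and> (\<forall>x\<in>I. \<forall>y\<in>I. x + y \<in> I) \<and> (\<forall>x\<in>I. - x \<in> I)
     \<and> (\<forall>x\<in>I. \<forall>s. skew_mult \<alpha> x s \<in> I)"

definition principal_right_ideal :: "('a::comm_ring_1 \<Rightarrow> 'a) \<Rightarrow> 'a poly \<Rightarrow> 'a poly set" where
  "principal_right_ideal \<alpha> p = range (skew_mult \<alpha> p)"

definition maximal_right_ideal :: "('a::comm_ring_1 \<Rightarrow> 'a) \<Rightarrow> 'a poly set \<Rightarrow> bool" where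
  "maximal_right_ideal \<alpha> M \<longleftrightarrow> right_ideal \<alpha> M \<and> M \<noteq> UNIV \<and>
     (\<forall>J. right_ideal \<alpha> J \<and> M \<subseteq> J \<longrightarrow> J = M \<or> J = UNIV)"

definition coset :: "'a::comm_ring_1 poly set \<Rightarrow> 'a poly \<Rightarrow> 'a poly set" where
  "coset M x = (\<lambda>m. x + m) ` M"

definition quot_mod :: "'a::comm_ring_1 poly set \<Rightarrow> 'a poly set set" where
  "quot_mod M = range (coset M)"

definition quot_add :: "'a::comm_ring_1 poly set \<Rightarrow> 'a poly set \<Rightarrow> 'a poly set" where
  "quot_add C D = {c + d | c d. c \<in> C \<and> d \<in> D}"

definition quot_neg :: "'a::comm_ring_1 poly set \<Rightarrow> 'a poly set" where
  "quot_neg C = uminus ` C"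

definition quot_act :: "('a::comm_ring_1 \<Rightarrow> 'a) \<Rightarrow> 'a poly set \<Rightarrow> 'a poly set \<Rightarrow> 'a poly \<Rightarrow> 'a poly set" where
  "quot_act \<alpha> M C s = {skew_mult \<alpha> c s + m | c m. c \<in> C \<and> m \<in> M}"

definition quot_submodule :: "('a::comm_ring_1 \<Rightarrow> 'a) \<Rightarrow> 'a poly set \<Rightarrow> 'a poly set set \<Rightarrow> bool" where
  "quot_submodule \<alpha> M N \<longleftrightarrow> N \<subseteq> quot_mod M \<and> M \<in> N \<and>
     (\<forall>C\<in>N. \<forall>D\<in>N. quot_add C D \<in> N) \<and> (\<forall>C\<in>N. quot_neg C \<in> N) \<and>
     (\<forall>C\<in>N. \<forall>s. quot_act \<alpha> M C s \<in> N)"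

definition quot_simple :: "('a::comm_ring_1 \<Rightarrow> 'a) \<Rightarrow> 'a poly set \<Rightarrow> bool" where
  "quot_simple \<alpha> M \<longleftrightarrow> quot_mod M \<noteq> {M} \<and>
     (\<forall>N. quot_submodule \<alpha> M N \<longrightarrow> N = {M} \<or> N = quot_mod M)"

definition quot_faithful :: "('a::comm_ring_1 \<Rightarrow> 'a) \<Rightarrow> 'a poly set \<Rightarrow> bool" where
  "quot_faithful \<alpha> M \<longleftrightarrow> (\<forall>s. (\<forall>C\<in>quot_mod M. quot_act \<alpha> M C s = M) \<longrightarrow> s = 0)"

end

theory Submission
  imports Defs
begin

locale aut =
  fixes \<alpha> :: "'a::comm_ring_1 \<Rightarrow> 'a"
  assumes aut: "ring_automorphism \<alpha>"
begin

lemma al_add: "\<alpha> (x + y) = \<alpha> x + \<alpha> y" using aut unfolding ring_automorphism_def by blast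
lemma al_mult: "\<alpha> (x * y) = \<alpha> x * \<alpha> y" using aut unfolding ring_automorphism_def by blast
lemma al_one: "\<alpha> 1 = 1" using aut unfolding ring_automorphism_def by blast
lemma al_bij: "bij \<alpha>" using aut unfolding ring_automorphism_def by blast
lemma al_zero: "\<alpha> 0 = 0" using al_add[of 0 0] by simp
lemma al_minus: "\<alpha> (- x) = - \<alpha> x" using al_add[of x "-x"] al_zero by (metis add.right_inverse neg_eq_iff_add_eq_0)
lemma al_diff: "\<alpha> (x - y) = \<alpha> x - \<alpha> y" using al_add[of x "-y"] al_minus by simp

lemma alp_add: "(\<alpha>^^n) (x + y) = (\<alpha>^^n) x + (\<alpha>^^n) y" by (induct n) (auto simp: al_add)
lemma alp_mult: "(\<alpha>^^n) (x * y) = (\<alpha>^^n) x * (\<alpha>^^n) y" by (induct n) (auto simp: al_mult)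
lemma alp_one: "(\<alpha>^^n) 1 = 1" by (induct n) (auto simp: al_one)
lemma alp_zero: "(\<alpha>^^n) 0 = 0" by (induct n) (auto simp: al_zero)
lemma alp_minus: "(\<alpha>^^n) (- x) = - (\<alpha>^^n) x" by (induct n) (auto simp: al_minus)
lemma alp_diff: "(\<alpha>^^n) (x - y) = (\<alpha>^^n) x - (\<alpha>^^n) y" by (induct n) (auto simp: al_diff)
lemma alp_bij: "bij (\<alpha>^^n)" using al_bij by (simp add: bij_betw_funpow)
lemma alp_inj: "(\<alpha>^^n) x = (\<alpha>^^n) y \<longleftrightarrow> x = y" using alp_bij bij_is_inj inj_eq by metis
lemma alp_surj: "\<exists>y. x = (\<alpha>^^n) y" using alp_bij by (metis bij_pointE)
lemma alp_sum: "(\<alpha>^^n) (\<Sum>i\<in>A. f i) = (\<Sum>i\<in>A. (\<alpha>^^n) (f i))"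
  by (induct A rule: infinite_finite_induct) (auto simp: alp_add alp_zero)
lemma al_sum: "\<alpha> (\<Sum>i\<in>A. f i) = (\<Sum>i\<in>A. \<alpha> (f i))"
  by (induct A rule: infinite_finite_induct) (auto simp: al_add al_zero)
lemma alp_prod: "(\<alpha>^^n) (\<Prod>i\<in>A. f i) = (\<Prod>i\<in>A. (\<alpha>^^n) (f i))"
  by (induct A rule: infinite_finite_induct) (auto simp: alp_mult alp_one)
lemma alp_comp: "(\<alpha>^^m) ((\<alpha>^^n) x) = (\<alpha>^^(m+n)) x" by (simp add: funpow_add)

lemmas alp_simps = alp_add alp_mult alp_one alp_zero alp_minus alp_diff alp_comp

lemma sum_tri:
  fixes c :: "nat \<Rightarrow> nat \<Rightarrow> 'a"
  assumes "\<And>i j. i > dp \<Longrightarrow> c i j = 0" "\<And>i j. j > dq \<Longrightarrow> c i j = 0"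
  shows "(\<Sum>i\<le>dp. \<Sum>j\<le>dq. if i + j = n then c i j else 0) = (\<Sum>i\<le>n. c i (n - i))"
proof -
  have 1: "(\<Sum>j\<le>dq. if i + j = n then c i j else 0) = (if i \<le> n then c i (n - i) else 0)" for i
  proof (cases "i \<le> n \<and> n - i \<le> dq")
    case True
    then have "(\<Sum>j\<le>dq. if i + j = n then c i j else 0) = (\<Sum>j\<le>dq. if j = n - i then c i (n - i) else 0)"
      by (intro sum.cong) auto
    then show ?thesis using True by simp
  next
    case False
    then show ?thesis using assms(2)[of "n - i" i] by (auto intro!: sum.neutral)
  qed
  have "(\<Sum>i\<le>dp. if i \<le> n then c i (n - i) else 0) = (\<Sum>i\<le>max dp n. if i \<le> n then c i (n - i) else 0)"
    by (rule sum.mono_neutral_left) (auto simp: assms(1))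
  also have "\<dots> = (\<Sum>i\<le>n. c i (n - i))"
    by (rule sum.mono_neutral_cong_right) auto
  finally show ?thesis by (simp add: 1)
qed

lemma coeff_skew: "coeff (skew_mult \<alpha> p q) n = (\<Sum>i\<le>n. coeff p i * (\<alpha>^^i) (coeff q (n - i)))"
  unfolding skew_mult_def coeff_sum coeff_monom
  by (rule sum_tri) (auto simp: coeff_eq_0 alp_zero)

lemma skew_add_left: "skew_mult \<alpha> (p + q) r = skew_mult \<alpha> p r + skew_mult \<alpha> q r"
  by (rule poly_eqI) (simp add: coeff_skew algebra_simps sum.distrib)
lemma skew_add_right: "skew_mult \<alpha> r (p + q) = skew_mult \<alpha> r p + skew_mult \<alpha> r q"
  by (rule poly_eqI) (simp add: coeff_skew algebra_simps sum.distrib alp_add)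
lemma skew_minus_left: "skew_mult \<alpha> (- p) r = - skew_mult \<alpha> p r"
  by (rule poly_eqI) (simp add: coeff_skew sum_negf)
lemma skew_minus_right: "skew_mult \<alpha> r (- p) = - skew_mult \<alpha> r p"
  by (rule poly_eqI) (simp add: coeff_skew sum_negf alp_minus)
lemma skew_diff_left: "skew_mult \<alpha> (p - q) r = skew_mult \<alpha> p r - skew_mult \<alpha> q r"
  using skew_add_left[of p "-q" r] skew_minus_left by simp
lemma skew_diff_right: "skew_mult \<alpha> r (p - q) = skew_mult \<alpha> r p - skew_mult \<alpha> r q"
  using skew_add_right[of r p "-q"] skew_minus_right by simp
lemma skew_0_left: "skew_mult \<alpha> 0 r = 0"
  by (rule poly_eqI) (simp add: coeff_skew)
lemma skew_0_right: "skew_mult \<alpha> r 0 = 0"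
  by (rule poly_eqI) (simp add: coeff_skew alp_zero)
lemma skew_1_left: "skew_mult \<alpha> 1 r = r"
proof (rule poly_eqI)
  fix n
  have "coeff (skew_mult \<alpha> 1 r) n = (\<Sum>i\<le>n. if i = 0 then coeff r n else 0)"
    unfolding coeff_skew by (intro sum.cong refl) (auto simp: coeff_1 alp_zero alp_one)
  then show "coeff (skew_mult \<alpha> 1 r) n = coeff r n" by simp
qed
lemma coeff_skew_const_left: "coeff (skew_mult \<alpha> (monom c 0) r) n = c * coeff r n"
proof -
  have "coeff (skew_mult \<alpha> (monom c 0) r) n = (\<Sum>i\<le>n. if i = 0 then c * coeff r n else 0)"
    unfolding coeff_skew by (intro sum.cong refl) (auto simp: coeff_monom alp_zero)
  then show ?thesis by simp
qed
lemma coeff_skew_const_right: "coeff (skew_mult \<alpha> r (monom c 0)) n = coeff r n * (\<alpha>^^n) c"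
proof -
  have "coeff (skew_mult \<alpha> r (monom c 0)) n = (\<Sum>i\<le>n. if i = n then coeff r n * (\<alpha>^^n) c else 0)"
    unfolding coeff_skew by (intro sum.cong refl) (auto simp: coeff_monom alp_zero)
  then show ?thesis by simp
qed
lemma coeff_skew_monom_left: "coeff (skew_mult \<alpha> (monom c d) r) n = (if d \<le> n then c * (\<alpha>^^d) (coeff r (n - d)) else 0)"
proof -
  have "coeff (skew_mult \<alpha> (monom c d) r) n = (\<Sum>i\<le>n. if i = d then c * (\<alpha>^^d) (coeff r (n - d)) else 0)"
    unfolding coeff_skew by (intro sum.cong refl) (auto simp: coeff_monom alp_zero)
  then show ?thesis by simp
qed

lemma skew_assoc: "skew_mult \<alpha> (skew_mult \<alpha> p q) r = skew_mult \<alpha> p (skew_mult \<alpha> q r)"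
proof (rule poly_eqI)
  fix n
  define H where "H i k = coeff p i * (\<alpha>^^i) (coeff q (k - i)) * (\<alpha>^^k) (coeff r (n - k))" for i k
  have "coeff (skew_mult \<alpha> (skew_mult \<alpha> p q) r) n = (\<Sum>k\<le>n. \<Sum>i\<le>k. H i k)"
    by (simp add: coeff_skew H_def sum_distrib_right)
  also have "\<dots> = (\<Sum>k\<le>n. \<Sum>i\<le>n. if i \<le> k then H i k else 0)"
  proof (rule sum.cong[OF refl])
    fix k assume "k \<in> {..n}"
    then show "(\<Sum>i\<le>k. H i k) = (\<Sum>i\<le>n. if i \<le> k then H i k else 0)"
      by (intro sum.mono_neutral_cong_left) auto
  qed
  also have "\<dots> = (\<Sum>i\<le>n. \<Sum>k\<le>n. if i \<le> k then H i k else 0)"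
    by (rule sum.swap)
  also have "\<dots> = (\<Sum>i\<le>n. \<Sum>k\<in>{i..n}. H i k)"
  proof (rule sum.cong[OF refl])
    fix i assume "i \<in> {..n}"
    then show "(\<Sum>k\<le>n. if i \<le> k then H i k else 0) = (\<Sum>k\<in>{i..n}. H i k)"
      by (intro sum.mono_neutral_cong_right) auto
  qed
  also have "\<dots> = (\<Sum>i\<le>n. \<Sum>j\<le>n - i. H i (j + i))"
  proof (rule sum.cong[OF refl])
    fix i assume "i \<in> {..n}"
    then have "{i..n} = {0 + i..(n - i) + i}" by auto
    then show "(\<Sum>k\<in>{i..n}. H i k) = (\<Sum>j\<le>n - i. H i (j + i))"
      by (simp only: sum.shift_bounds_cl_nat_ivl atLeast0AtMost)
  qed
  also have "\<dots> = coeff (skew_mult \<alpha> p (skew_mult \<alpha> q r)) n"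
    by (simp add: coeff_skew H_def sum_distrib_left alp_sum alp_mult alp_comp algebra_simps)
  finally show "coeff (skew_mult \<alpha> (skew_mult \<alpha> p q) r) n = coeff (skew_mult \<alpha> p (skew_mult \<alpha> q r)) n" .
qed

lemma normN_0[simp]: "normN \<alpha> 0 b = 1" by (simp add: normN_def)
lemma normN_Suc: "normN \<alpha> (Suc n) b = normN \<alpha> n b * (\<alpha>^^n) b" by (simp add: normN_def)
lemma normN_1: "normN \<alpha> 1 b = b" by (simp add: normN_def)
lemma normN_Suc0[simp]: "normN \<alpha> (Suc 0) b = b" by (simp add: normN_def)
lemma normN_add: "normN \<alpha> (m + n) b = normN \<alpha> m b * (\<alpha>^^m) (normN \<alpha> n b)"
  by (induct n) (simp_all add: normN_Suc alp_mult alp_one alp_comp mult.assoc)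
lemma normN_Suc2: "normN \<alpha> (Suc n) b = b * \<alpha> (normN \<alpha> n b)"
  using normN_add[of 1 n b] by (simp add: normN_1)

end

locale spec = aut +
  fixes a :: "'a::comm_ring_1"
  assumes noeth: "noetherian_ring TYPE('a)"
    and sp: "alpha_special_element \<alpha> a"
begin

lemma normN_nz: "n \<ge> 1 \<Longrightarrow> normN \<alpha> n a \<noteq> 0" using sp unfolding alpha_special_element_def by blast
lemma a_nz: "a \<noteq> 0" using normN_nz[of 1] by (simp add: normN_1)
lemma one_nz: "(1::'a) \<noteq> 0" using a_nz by (metis mult_1 mult_zero_left)
lemma special: "r_ideal I \<Longrightarrow> alpha_stable \<alpha> I \<Longrightarrow> I \<noteq> {0} \<Longrightarrow> \<exists>n\<ge>1. normN \<alpha> n a \<in> I"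
  using sp unfolding alpha_special_element_def by blast

lemma ideal_image: assumes "r_ideal I" shows "r_ideal ((\<alpha>^^n) ` I)"
  unfolding r_ideal_def
proof (intro conjI ballI allI)
  show "0 \<in> (\<alpha>^^n) ` I" using assms alp_zero unfolding r_ideal_def by (metis image_eqI)
next
  fix x y assume "x \<in> (\<alpha>^^n) ` I" "y \<in> (\<alpha>^^n) ` I"
  then obtain u v where "u \<in> I" "v \<in> I" "x = (\<alpha>^^n) u" "y = (\<alpha>^^n) v" by auto
  then show "x + y \<in> (\<alpha>^^n) ` I" using assms unfolding r_ideal_def by (metis alp_add image_eqI)
next
  fix x assume "x \<in> (\<alpha>^^n) ` I"
  then obtain u where "u \<in> I" "x = (\<alpha>^^n) u" by auto
  then show "- x \<in> (\<alpha>^^n) ` I" using assms unfolding r_ideal_def by (metis alp_minus image_eqI)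
next
  fix r x assume "x \<in> (\<alpha>^^n) ` I"
  then obtain u where "u \<in> I" "x = (\<alpha>^^n) u" by auto
  moreover obtain s where "r = (\<alpha>^^n) s" using alp_surj by blast
  ultimately show "r * x \<in> (\<alpha>^^n) ` I" using assms unfolding r_ideal_def by (metis alp_mult image_eqI)
qed

lemma stab_lemma:
  assumes I: "r_ideal I" and H: "\<And>y. a * \<alpha> y \<in> I \<Longrightarrow> y \<in> I"
  shows "alpha_stable \<alpha> I"
proof -
  have sub: "I \<subseteq> \<alpha> ` I"
  proof
    fix y assume "y \<in> I"
    obtain z where z: "y = \<alpha> z" using al_bij by (metis bij_pointE)
    have "a * \<alpha> z \<in> I" using I \<open>y \<in> I\<close> z unfolding r_ideal_def by auto
    then show "y \<in> \<alpha> ` I" using H z by auto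
  qed
  define C where "C n = (\<alpha>^^n) ` I" for n
  have "\<forall>n. r_ideal (C n)" using ideal_image[OF I] C_def by auto
  moreover have "\<forall>n. C n \<subseteq> C (Suc n)"
  proof
    fix n
    have "C n \<subseteq> (\<alpha>^^n) ` (\<alpha> ` I)" using sub C_def by auto
    also have "\<dots> = C (Suc n)" unfolding C_def by (simp only: funpow_Suc_right image_comp)
    finally show "C n \<subseteq> C (Suc n)" .
  qed
  ultimately obtain N where "\<forall>n\<ge>N. C n = C N" using noeth[unfolded noetherian_ring_def, rule_format, of C] by blast
  then have "C (Suc N) = C N" using le_SucI[OF order_refl] by blast
  then have "(\<alpha>^^N) ` (\<alpha> ` I) = (\<alpha>^^N) ` I" unfolding C_def by (simp only: funpow_Suc_right image_comp)
  moreover have "inj (\<alpha>^^N)" using alp_bij[of N] by (rule bij_is_inj)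
  ultimately have "\<alpha> ` I = I" by (simp add: inj_image_eq_iff)
  then show ?thesis unfolding alpha_stable_def .
qed

lemma K_trans: "normN \<alpha> m a * (\<alpha>^^m) x = 0 \<Longrightarrow> normN \<alpha> (k + m) a * (\<alpha>^^(k + m)) x = 0"
  by (simp add: normN_add alp_comp[symmetric] mult.assoc alp_mult[symmetric] alp_zero)

lemma K_zero: assumes "normN \<alpha> m a * (\<alpha>^^m) x = 0" shows "x = 0"
proof -
  define K where "K = {r. \<exists>m. normN \<alpha> m a * (\<alpha>^^m) r = 0}"
  have KI: "r_ideal K" unfolding r_ideal_def
  proof (intro conjI ballI allI)
    show "0 \<in> K" unfolding K_def by (auto intro: exI[of _ 0])
  next
    fix x y assume "x \<in> K" "y \<in> K"
    then obtain m m' where m: "normN \<alpha> m a * (\<alpha>^^m) x = 0" "normN \<alpha> m' a * (\<alpha>^^m') y = 0"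
      unfolding K_def by auto
    have "normN \<alpha> (m' + m) a * (\<alpha>^^(m' + m)) x = 0" by (rule K_trans[OF m(1)])
    moreover have "normN \<alpha> (m + m') a * (\<alpha>^^(m + m')) y = 0" by (rule K_trans[OF m(2)])
    ultimately have "normN \<alpha> (m + m') a * (\<alpha>^^(m + m')) (x + y) = 0"
      by (simp add: alp_add distrib_left add.commute)
    then show "x + y \<in> K" unfolding K_def by blast
  next
    fix x assume "x \<in> K"
    then show "- x \<in> K" unfolding K_def by (auto simp: alp_minus)
  next
    fix r x assume "x \<in> K"
    then obtain m where "normN \<alpha> m a * (\<alpha>^^m) x = 0" unfolding K_def by auto
    moreover have "normN \<alpha> m a * (\<alpha>^^m) (r * x) = (\<alpha>^^m) r * (normN \<alpha> m a * (\<alpha>^^m) x)"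
      by (simp add: alp_mult ac_simps)
    ultimately have "normN \<alpha> m a * (\<alpha>^^m) (r * x) = 0" by simp
    then show "r * x \<in> K" unfolding K_def by blast
  qed
  have "alpha_stable \<alpha> K"
  proof (rule stab_lemma[OF KI])
    fix y assume "a * \<alpha> y \<in> K"
    then obtain m where "normN \<alpha> m a * (\<alpha>^^m) (a * \<alpha> y) = 0" unfolding K_def by auto
    then have "normN \<alpha> (Suc m) a * (\<alpha>^^(Suc m)) y = 0"
      by (simp add: normN_Suc alp_mult mult.assoc funpow_swap1)
    then show "y \<in> K" unfolding K_def by blast
  qed
  have "K = {0}"
  proof (rule ccontr)
    assume "K \<noteq> {0}"
    then obtain n where n: "n \<ge> 1" "normN \<alpha> n a \<in> K" using special[OF KI \<open>alpha_stable \<alpha> K\<close>] by blast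
    then obtain m where "normN \<alpha> m a * (\<alpha>^^m) (normN \<alpha> n a) = 0" unfolding K_def by auto
    then have "normN \<alpha> (m + n) a = 0" by (simp add: normN_add)
    then show False using normN_nz[of "m + n"] n by simp
  qed
  then show ?thesis using assms unfolding K_def by blast
qed

lemma a_reg: "a * \<alpha> y = 0 \<Longrightarrow> y = 0"
  using K_zero[of 1 y] by (simp add: normN_1)

lemma normN_reg: assumes "normN \<alpha> n a * y = 0" shows "y = 0"
proof -
  obtain z where z: "y = (\<alpha>^^n) z" using alp_surj by blast
  then have "z = 0" using K_zero assms by blast
  then show ?thesis using z alp_zero by simp
qed

abbreviation "p0 \<equiv> 1 - smult a theta"
abbreviation "M \<equiv> principal_right_ideal \<alpha> p0"

definition V :: "'a poly \<Rightarrow> nat \<Rightarrow> 'a" where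
  "V f d = (\<Sum>i\<le>d. normN \<alpha> (d - i) a * (\<alpha>^^(d - i)) (coeff f i))"

lemma coeff_p0: "coeff p0 n = (if n = 0 then 1 else if n = 1 then - a else 0)"
  by (simp add: theta_def coeff_monom coeff_1)

lemma coeff_p0g_0: "coeff (skew_mult \<alpha> p0 g) 0 = coeff g 0"
  by (simp add: coeff_skew theta_def coeff_monom)

lemma coeff_p0g_Suc: "coeff (skew_mult \<alpha> p0 g) (Suc n) = coeff g (Suc n) - a * \<alpha> (coeff g n)"
proof -
  have "coeff (skew_mult \<alpha> p0 g) (Suc n) =
     (\<Sum>i\<le>Suc n. (if i = 0 then coeff g (Suc n) else 0) + (if i = 1 then - a * \<alpha> (coeff g n) else 0))"
    unfolding coeff_skew by (rule sum.cong[OF refl]) (auto simp: theta_def coeff_monom)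
  also have "\<dots> = coeff g (Suc n) - a * \<alpha> (coeff g n)"
    by (simp add: sum.distrib)
  finally show ?thesis .
qed

lemma V_0: "V f 0 = coeff f 0" by (simp add: V_def)

lemma V_Suc: "V f (Suc d) = coeff f (Suc d) + a * \<alpha> (V f d)"
proof -
  have "V f (Suc d) = coeff f (Suc d) + (\<Sum>i\<le>d. normN \<alpha> (Suc d - i) a * (\<alpha>^^(Suc d - i)) (coeff f i))"
    unfolding V_def by (simp add: add.commute)
  also have "(\<Sum>i\<le>d. normN \<alpha> (Suc d - i) a * (\<alpha>^^(Suc d - i)) (coeff f i)) = a * \<alpha> (V f d)"
    unfolding V_def sum_distrib_left al_sum
  proof (rule sum.cong[OF refl])
    fix i assume "i \<in> {..d}"
    then have "Suc d - i = Suc (d - i)" by auto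
    then show "normN \<alpha> (Suc d - i) a * (\<alpha>^^(Suc d - i)) (coeff f i) =
      a * \<alpha> (normN \<alpha> (d - i) a * (\<alpha> ^^ (d - i)) (coeff f i))"
      by (simp add: normN_Suc2 al_mult mult.assoc)
  qed
  finally show ?thesis .
qed

lemma V_diff: "V (f - g) d = V f d - V g d"
  unfolding V_def by (simp add: alp_diff right_diff_distrib sum_subtractf)

lemma V_monom: "V (monom c d) d = c"
proof -
  have "V (monom c d) d = (\<Sum>i\<le>d. if i = d then c else 0)"
    unfolding V_def by (rule sum.cong[OF refl]) (auto simp: coeff_monom alp_zero)
  then show ?thesis by simp
qed

lemma memM: "f \<in> M \<longleftrightarrow> (\<exists>d\<ge>degree f. V f d = 0)"
proof
  assume "f \<in> M"
  then obtain g where g: "f = skew_mult \<alpha> p0 g" unfolding principal_right_ideal_def by auto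
  have Vg: "V f d = coeff g d" for d
  proof (induct d)
    case 0 then show ?case by (simp add: V_0 g coeff_p0g_0)
  next
    case (Suc d) then show ?case by (simp add: V_Suc g coeff_p0g_Suc)
  qed
  show "\<exists>d\<ge>degree f. V f d = 0"
    by (rule exI[of _ "degree f + Suc (degree g)"]) (simp add: Vg coeff_eq_0)
next
  assume "\<exists>d\<ge>degree f. V f d = 0"
  then obtain d where d: "degree f \<le> d" "V f d = 0" by auto
  define g where "g = (\<Sum>n\<le>d. monom (V f n) n)"
  have cg: "coeff g n = (if n \<le> d then V f n else 0)" for n
  proof -
    have "coeff g n = (\<Sum>k\<le>d. if n = k then V f k else 0)"
      unfolding g_def coeff_sum by (simp add: coeff_monom)
    then show ?thesis by simp
  qed
  have "skew_mult \<alpha> p0 g = f"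
  proof (rule poly_eqI)
    fix n show "coeff (skew_mult \<alpha> p0 g) n = coeff f n"
    proof (cases n)
      case 0 then show ?thesis by (simp add: coeff_p0g_0 cg V_0)
    next
      case (Suc m)
      consider "Suc m \<le> d" | "m = d" | "m > d" by linarith
      then show ?thesis
      proof cases
        case 1 then show ?thesis using Suc by (simp add: coeff_p0g_Suc cg V_Suc)
      next
        case 2 then show ?thesis using Suc d by (simp add: coeff_p0g_Suc cg coeff_eq_0 al_zero)
      next
        case 3 then show ?thesis using Suc d by (simp add: coeff_p0g_Suc cg coeff_eq_0 al_zero)
      qed
    qed
  qed
  then show "f \<in> M" unfolding principal_right_ideal_def by (metis rangeI)
qed

lemma skew_monom_monom: "skew_mult \<alpha> (monom x i) (monom y j) = monom (x * (\<alpha>^^i) y) (i + j)"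
  by (rule poly_eqI) (auto simp: coeff_skew_monom_left coeff_monom alp_zero)

lemma ri_diff: assumes "right_ideal \<alpha> J" "x \<in> J" "y \<in> J" shows "x - y \<in> J"
proof -
  have "- y \<in> J" using assms unfolding right_ideal_def by blast
  then have "x + - y \<in> J" using assms unfolding right_ideal_def by blast
  then show ?thesis by simp
qed
lemma ri_iff: assumes J: "right_ideal \<alpha> J" and d: "x - y \<in> J" shows "x \<in> J \<longleftrightarrow> y \<in> J"
proof
  assume "x \<in> J"
  then have "x - (x - y) \<in> J" using ri_diff[OF J _ d] by blast
  then show "y \<in> J" by simp
next
  assume "y \<in> J"
  then have "(x - y) + y \<in> J" using J d unfolding right_ideal_def by blast
  then show "x \<in> J" by simp
qed

lemma M_ri: "right_ideal \<alpha> M"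
  unfolding right_ideal_def principal_right_ideal_def
proof (intro conjI ballI allI)
  have "skew_mult \<alpha> p0 0 = 0" by (rule skew_0_right)
  then show "0 \<in> range (skew_mult \<alpha> p0)" by (metis rangeI)
next
  fix x y assume "x \<in> range (skew_mult \<alpha> p0)" "y \<in> range (skew_mult \<alpha> p0)"
  then obtain g h where "x = skew_mult \<alpha> p0 g" "y = skew_mult \<alpha> p0 h" by blast
  then have "x + y = skew_mult \<alpha> p0 (g + h)" by (simp add: skew_add_right)
  then show "x + y \<in> range (skew_mult \<alpha> p0)" by simp
next
  fix x assume "x \<in> range (skew_mult \<alpha> p0)"
  then obtain g where "x = skew_mult \<alpha> p0 g" by blast
  then have "- x = skew_mult \<alpha> p0 (- g)" by (simp add: skew_minus_right)
  then show "- x \<in> range (skew_mult \<alpha> p0)" by simp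
next
  fix x s assume "x \<in> range (skew_mult \<alpha> p0)"
  then obtain g where "x = skew_mult \<alpha> p0 g" by blast
  then have "skew_mult \<alpha> x s = skew_mult \<alpha> p0 (skew_mult \<alpha> g s)" by (simp add: skew_assoc)
  then show "skew_mult \<alpha> x s \<in> range (skew_mult \<alpha> p0)" by simp
qed

lemma V_one: "V 1 d = normN \<alpha> d a"
proof -
  have "V 1 d = (\<Sum>i\<le>d. if i = 0 then normN \<alpha> d a else 0)"
    unfolding V_def by (rule sum.cong[OF refl]) (auto simp: coeff_1 alp_one alp_zero)
  then show ?thesis by simp
qed

lemma one_notin_M: "1 \<notin> M"
proof
  assume "1 \<in> M"
  then obtain d where "V 1 d = 0" using memM by auto
  then have "normN \<alpha> d a = 0" by (simp add: V_one)
  then show False using normN_nz[of d] one_nz by (cases d) auto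
qed

lemma M_shift: "monom y d - monom (a * \<alpha> y) (Suc d) \<in> M"
proof -
  have "skew_mult \<alpha> p0 (monom y d) = monom y d - monom (a * \<alpha> y) (Suc d)"
  proof (rule poly_eqI)
    fix n show "coeff (skew_mult \<alpha> p0 (monom y d)) n = coeff (monom y d - monom (a * \<alpha> y) (Suc d)) n"
      by (cases n) (auto simp: coeff_p0g_0 coeff_p0g_Suc coeff_monom al_zero)
  qed
  then show ?thesis unfolding principal_right_ideal_def by (metis rangeI)
qed

lemma M_V: assumes "degree f \<le> d" shows "f - monom (V f d) d \<in> M"
proof -
  have "degree (f - monom (V f d) d) \<le> d"
    using assms by (meson degree_diff_le degree_monom_le)
  moreover have "V (f - monom (V f d) d) d = 0" by (simp add: V_diff V_monom)
  ultimately show ?thesis using memM by blast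
qed

lemma normN_down: "normN \<alpha> (k + j) a \<in> I \<Longrightarrow> r_ideal I \<Longrightarrow> (\<And>y. a * \<alpha> y \<in> I \<Longrightarrow> y \<in> I) \<Longrightarrow> normN \<alpha> j a \<in> I"
proof (induct k)
  case 0 then show ?case by simp
next
  case (Suc k)
  then have "a * \<alpha> (normN \<alpha> (k + j) a) \<in> I" by (simp add: normN_Suc2)
  then show ?case using Suc by blast
qed

lemma M_maximal: "maximal_right_ideal \<alpha> M"
  unfolding maximal_right_ideal_def
proof (intro conjI allI impI)
  show "right_ideal \<alpha> M" by (rule M_ri)
  show "M \<noteq> UNIV" using one_notin_M by auto
  fix J assume "right_ideal \<alpha> J \<and> M \<subseteq> J"
  then have J: "right_ideal \<alpha> J" and MJ: "M \<subseteq> J" by auto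
  show "J = M \<or> J = UNIV"
  proof (cases "J = M")
    case True then show ?thesis by simp
  next
    case False
    with MJ obtain f where f: "f \<in> J" "f \<notin> M" by blast
    define Ii where "Ii d = {y. monom y d \<in> J}" for d
    have Iid: "r_ideal (Ii d)" for d
      unfolding r_ideal_def Ii_def
    proof (intro conjI ballI allI; simp)
      show "0 \<in> J" using J unfolding right_ideal_def by auto
    next
      fix x y assume "monom x d \<in> J" "monom y d \<in> J"
      then have "monom x d + monom y d \<in> J" using J unfolding right_ideal_def by blast
      then show "monom (x + y) d \<in> J" by (simp add: add_monom)
    next
      fix x assume "monom x d \<in> J"
      then have "- monom x d \<in> J" using J unfolding right_ideal_def by blast
      then show "monom (- x) d \<in> J" by (simp add: minus_monom)
    next
      fix r x assume "monom x d \<in> J"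
      obtain s where s: "r = (\<alpha>^^d) s" using alp_surj by blast
      have "skew_mult \<alpha> (monom x d) (monom s 0) \<in> J" using J \<open>monom x d \<in> J\<close> unfolding right_ideal_def by auto
      then show "monom (r * x) d \<in> J" by (simp add: skew_monom_monom s mult.commute)
    qed
    have chain: "Ii d \<subseteq> Ii (Suc d)" for d
    proof
      fix y assume "y \<in> Ii d"
      then have "skew_mult \<alpha> (monom y d) (monom 1 1) \<in> J" using J unfolding right_ideal_def Ii_def by auto
      then show "y \<in> Ii (Suc d)" by (simp add: skew_monom_monom alp_one Ii_def)
    qed
    have shift: "y \<in> Ii d \<longleftrightarrow> a * \<alpha> y \<in> Ii (Suc d)" for y d
    proof -
      have "monom y d - monom (a * \<alpha> y) (Suc d) \<in> J" using M_shift MJ by blast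
      then show ?thesis using ri_iff[OF J] unfolding Ii_def by simp
    qed
    have shiftk: "y \<in> Ii d \<longleftrightarrow> normN \<alpha> k a * (\<alpha>^^k) y \<in> Ii (d + k)" for y d k
    proof (induct k)
      case 0 then show ?case by simp
    next
      case (Suc k)
      have "normN \<alpha> (Suc k) a * (\<alpha>^^(Suc k)) y = a * \<alpha> (normN \<alpha> k a * (\<alpha>^^k) y)"
        by (simp add: normN_Suc2 al_mult mult.assoc)
      then show ?case using Suc shift[of "normN \<alpha> k a * (\<alpha>^^k) y" "d + k"] by (simp only: add_Suc_right)
    qed
    obtain D where D: "\<forall>n\<ge>D. Ii n = Ii D"
      using noeth[unfolded noetherian_ring_def, rule_format, of Ii] Iid chain by blast
    define I where "I = Ii D"
    have stabH: "a * \<alpha> y \<in> I \<Longrightarrow> y \<in> I" for y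
    proof -
      have "Ii (Suc D) = Ii D" using D le_SucI[OF order_refl] by blast
      then show "a * \<alpha> y \<in> I \<Longrightarrow> y \<in> I" using shift[of y D] unfolding I_def by simp
    qed
    have II: "r_ideal I" using Iid unfolding I_def by blast
    have Istab: "alpha_stable \<alpha> I" by (rule stab_lemma[OF II stabH])
    define d where "d = max (degree f) D"
    have "monom (V f d) d \<in> J"
    proof -
      have "f - monom (V f d) d \<in> J" using M_V[of f d] MJ d_def by auto
      then show ?thesis using ri_iff[OF J, of f "monom (V f d) d"] f(1) by simp
    qed
    moreover have "V f d \<noteq> 0" using memM f(2) d_def by auto
    moreover have "D \<le> d" using d_def by simp
    then have "Ii d = Ii D" using D by blast
    ultimately have "V f d \<in> I" "V f d \<noteq> 0" unfolding I_def Ii_def by auto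
    then have "I \<noteq> {0}" by blast
    then obtain n where n: "normN \<alpha> n a \<in> I" using special[OF II Istab] by blast
    have "normN \<alpha> 0 a \<in> I" using normN_down[of n 0 I, OF _ II stabH] n by simp
    then have "1 \<in> I" by simp
    then have "normN \<alpha> D a * 1 \<in> I" using Iid[of D] unfolding I_def r_ideal_def by blast
    then have "normN \<alpha> D a * (\<alpha>^^D) 1 \<in> Ii (0 + D)" by (simp add: alp_one I_def)
    then have "1 \<in> Ii 0" using shiftk[of 1 0 D] by simp
    then have one: "1 \<in> J" unfolding Ii_def by (simp add: monom_0 one_pCons)
    have "J = UNIV"
    proof (rule set_eqI, simp)
      fix x
      have "skew_mult \<alpha> 1 x \<in> J" using J one unfolding right_ideal_def by blast
      then show "x \<in> J" by (simp add: skew_1_left)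
    qed
    then show ?thesis by simp
  qed
qed

lemma coset_self: "right_ideal \<alpha> J \<Longrightarrow> x \<in> coset J x"
  unfolding coset_def right_ideal_def by (metis add_0_right image_eqI)

lemma coset_eq_J: assumes J: "right_ideal \<alpha> J" shows "coset J x = J \<longleftrightarrow> x \<in> J"
proof
  assume "coset J x = J" then show "x \<in> J" using coset_self[OF J, of x] by simp
next
  assume x: "x \<in> J"
  show "coset J x = J"
  proof
    show "coset J x \<subseteq> J" using J x unfolding coset_def right_ideal_def by blast
    show "J \<subseteq> coset J x"
    proof
      fix m assume "m \<in> J"
      then have "m - x \<in> J" using ri_diff[OF J _ x] by blast
      moreover have "m = x + (m - x)" by simp
      ultimately show "m \<in> coset J x" unfolding coset_def by blast
    qed
  qed
qed

lemma quot_add_coset: assumes J: "right_ideal \<alpha> J" shows "quot_add (coset J x) (coset J y) = coset J (x + y)"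
proof
  show "quot_add (coset J x) (coset J y) \<subseteq> coset J (x + y)"
  proof
    fix z assume "z \<in> quot_add (coset J x) (coset J y)"
    then obtain m n where "m \<in> J" "n \<in> J" "z = (x + m) + (y + n)" unfolding quot_add_def coset_def by blast
    moreover then have "m + n \<in> J" using J unfolding right_ideal_def by blast
    ultimately show "z \<in> coset J (x + y)" unfolding coset_def by (auto simp: algebra_simps intro!: image_eqI[of _ _ "m + n"])
  qed
  show "coset J (x + y) \<subseteq> quot_add (coset J x) (coset J y)"
  proof
    fix z assume "z \<in> coset J (x + y)"
    then obtain m where m: "m \<in> J" "z = x + y + m" unfolding coset_def by blast
    have "0 \<in> J" using J unfolding right_ideal_def by blast
    then have "x + m \<in> coset J x" "y + 0 \<in> coset J y" using m unfolding coset_def by blast+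
    moreover have "z = (x + m) + (y + 0)" using m by (simp add: algebra_simps)
    ultimately show "z \<in> quot_add (coset J x) (coset J y)" unfolding quot_add_def by blast
  qed
qed

lemma quot_neg_coset: assumes J: "right_ideal \<alpha> J" shows "quot_neg (coset J x) = coset J (- x)"
proof
  show "quot_neg (coset J x) \<subseteq> coset J (- x)"
  proof
    fix z assume "z \<in> quot_neg (coset J x)"
    then obtain m where "m \<in> J" "z = - (x + m)" unfolding quot_neg_def coset_def by blast
    moreover then have "- m \<in> J" using J unfolding right_ideal_def by blast
    ultimately show "z \<in> coset J (- x)" unfolding coset_def by (auto intro!: image_eqI[of _ _ "- m"])
  qed
  show "coset J (- x) \<subseteq> quot_neg (coset J x)"
  proof
    fix z assume "z \<in> coset J (- x)"
    then obtain m where m: "m \<in> J" "z = - x + m" unfolding coset_def by blast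
    then have "- m \<in> J" using J unfolding right_ideal_def by blast
    then have "x + - m \<in> coset J x" unfolding coset_def by blast
    moreover have "z = - (x + - m)" using m by simp
    ultimately show "z \<in> quot_neg (coset J x)" unfolding quot_neg_def by blast
  qed
qed

lemma quot_act_coset: assumes J: "right_ideal \<alpha> J" shows "quot_act \<alpha> J (coset J x) s = coset J (skew_mult \<alpha> x s)"
proof
  show "quot_act \<alpha> J (coset J x) s \<subseteq> coset J (skew_mult \<alpha> x s)"
  proof
    fix z assume "z \<in> quot_act \<alpha> J (coset J x) s"
    then obtain m n where mn: "m \<in> J" "n \<in> J" "z = skew_mult \<alpha> (x + m) s + n" unfolding quot_act_def coset_def by blast
    then have "skew_mult \<alpha> m s \<in> J" using J unfolding right_ideal_def by blast
    then have "skew_mult \<alpha> m s + n \<in> J" using J mn unfolding right_ideal_def by blast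
    moreover have "z = skew_mult \<alpha> x s + (skew_mult \<alpha> m s + n)" using mn by (simp add: skew_add_left)
    ultimately show "z \<in> coset J (skew_mult \<alpha> x s)" unfolding coset_def by blast
  qed
  show "coset J (skew_mult \<alpha> x s) \<subseteq> quot_act \<alpha> J (coset J x) s"
  proof
    fix z assume "z \<in> coset J (skew_mult \<alpha> x s)"
    then obtain m where m: "m \<in> J" "z = skew_mult \<alpha> x s + m" unfolding coset_def by blast
    have "x \<in> coset J x" by (rule coset_self[OF J])
    then show "z \<in> quot_act \<alpha> J (coset J x) s" unfolding quot_act_def using m by blast
  qed
qed

lemma M_simple: "quot_simple \<alpha> M"
  unfolding quot_simple_def
proof (intro conjI allI impI)
  have "coset M 1 \<in> quot_mod M" unfolding quot_mod_def by blast
  moreover have "coset M 1 \<noteq> M" using coset_eq_J[OF M_ri] one_notin_M by blast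
  ultimately show "quot_mod M \<noteq> {M}" by blast
next
  fix N assume N: "quot_submodule \<alpha> M N"
  define K where "K = {x. coset M x \<in> N}"
  have MN: "M \<in> N" using N unfolding quot_submodule_def by blast
  have cM: "x \<in> M \<Longrightarrow> coset M x = M" for x using coset_eq_J[OF M_ri] by blast
  have KM: "M \<subseteq> K" unfolding K_def using cM MN by auto
  have KR: "right_ideal \<alpha> K" unfolding right_ideal_def
  proof (intro conjI ballI allI)
    show "0 \<in> K" using KM M_ri unfolding right_ideal_def by blast
  next
    fix x y assume "x \<in> K" "y \<in> K"
    then have "quot_add (coset M x) (coset M y) \<in> N" using N unfolding K_def quot_submodule_def by blast
    then show "x + y \<in> K" unfolding K_def by (simp add: quot_add_coset[OF M_ri])
  next
    fix x assume "x \<in> K"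
    then have "quot_neg (coset M x) \<in> N" using N unfolding K_def quot_submodule_def by blast
    then show "- x \<in> K" unfolding K_def by (simp add: quot_neg_coset[OF M_ri])
  next
    fix x s assume "x \<in> K"
    then have "quot_act \<alpha> M (coset M x) s \<in> N" using N unfolding K_def quot_submodule_def by blast
    then show "skew_mult \<alpha> x s \<in> K" unfolding K_def by (simp add: quot_act_coset[OF M_ri])
  qed
  have NQ: "N \<subseteq> quot_mod M" using N unfolding quot_submodule_def by blast
  have "K = M \<or> K = UNIV" using M_maximal KR KM unfolding maximal_right_ideal_def by blast
  then show "N = {M} \<or> N = quot_mod M"
  proof
    assume "K = M"
    have "N \<subseteq> {M}"
    proof
      fix C assume "C \<in> N"
      then obtain x where x: "C = coset M x" using NQ unfolding quot_mod_def by blast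
      then have "x \<in> K" using \<open>C \<in> N\<close> unfolding K_def by simp
      then show "C \<in> {M}" using x cM \<open>K = M\<close> by simp
    qed
    then show ?thesis using MN by blast
  next
    assume "K = UNIV"
    then have "quot_mod M \<subseteq> N" unfolding quot_mod_def K_def by auto
    then show ?thesis using NQ by blast
  qed
qed

lemma M_faithful:
  assumes inf: "\<forall>n>0. \<alpha> ^^ n \<noteq> id"
  shows "quot_faithful \<alpha> M"
  unfolding quot_faithful_def
proof (intro allI impI)
  define A where "A = {s. \<forall>f. skew_mult \<alpha> f s \<in> M}"
  have A_left: "skew_mult \<alpha> g s \<in> A" if "s \<in> A" for g s
    using that unfolding A_def by (simp add: skew_assoc[symmetric])
  have A_right: "skew_mult \<alpha> s g \<in> A" if "s \<in> A" for g s
  proof -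
    have "skew_mult \<alpha> (skew_mult \<alpha> f s) g \<in> M" for f
      using that M_ri unfolding A_def right_ideal_def by blast
    then show ?thesis unfolding A_def by (simp add: skew_assoc)
  qed
  have A_diff: "s - t \<in> A" if "s \<in> A" "t \<in> A" for s t
    using that ri_diff[OF M_ri] unfolding A_def by (simp add: skew_diff_right)
  have A_M: "s \<in> M" if "s \<in> A" for s
  proof -
    have "skew_mult \<alpha> 1 s \<in> M" using that unfolding A_def by blast
    then show ?thesis by (simp add: skew_1_left)
  qed
  have A0: "A \<subseteq> {0}"
  proof (rule ccontr)
    assume "\<not> A \<subseteq> {0}"
    then obtain s0 where "s0 \<in> A" "s0 \<noteq> 0" by blast
    then have "\<exists>x. (x \<in> A \<and> x \<noteq> 0) \<and> (\<forall>y. y \<in> A \<and> y \<noteq> 0 \<longrightarrow> degree x \<le> degree y)"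
      by (intro ex_has_least_nat[where P="\<lambda>t. t \<in> A \<and> t \<noteq> 0"]) simp
    then obtain s where s: "s \<in> A" "s \<noteq> 0" and smin: "\<forall>t. t \<in> A \<and> t \<noteq> 0 \<longrightarrow> degree s \<le> degree t"
      by blast
    define e where "e = degree s"
    have lc: "coeff s e \<noteq> 0" using s(2) e_def by simp
    have rel: "coeff s n * ((\<alpha>^^e) r - (\<alpha>^^n) r) = 0" for n r
    proof -
      define t where "t = skew_mult \<alpha> (monom ((\<alpha>^^e) r) 0) s - skew_mult \<alpha> s (monom r 0)"
      have tA: "t \<in> A" unfolding t_def using A_diff A_left A_right s(1) by blast
      have ct: "coeff t k = coeff s k * ((\<alpha>^^e) r - (\<alpha>^^k) r)" for k
        unfolding t_def by (simp add: coeff_skew_const_left coeff_skew_const_right algebra_simps)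
      have "t = 0"
      proof (rule ccontr)
        assume "t \<noteq> 0"
        have "\<forall>k>e. coeff t k = 0" using ct e_def by (simp add: coeff_eq_0)
        then have "degree t \<le> e" by (rule degree_le)
        moreover have "degree t \<noteq> e"
        proof
          assume "degree t = e"
          moreover have "coeff t e = 0" using ct[of e] by simp
          ultimately have "coeff t (degree t) = 0" by simp
          then show False using \<open>t \<noteq> 0\<close> by simp
        qed
        ultimately have "degree t < degree s" using e_def by simp
        moreover have "degree s \<le> degree t" using smin tA \<open>t \<noteq> 0\<close> by blast
        ultimately show False by simp
      qed
      then show ?thesis using ct[of n] by simp
    qed
    have "\<exists>i<e. coeff s i \<noteq> 0"
    proof (rule ccontr)
      assume "\<not> (\<exists>i<e. coeff s i \<noteq> 0)"
      then have z: "i < e \<Longrightarrow> coeff s i = 0" for i by blast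
      obtain d where d: "d \<ge> degree s" "V s d = 0" using memM A_M s(1) by blast
      have "V s d = (\<Sum>i\<le>d. if i = e then normN \<alpha> (d - e) a * (\<alpha>^^(d - e)) (coeff s e) else 0)"
        unfolding V_def
      proof (rule sum.cong[OF refl])
        fix i assume "i \<in> {..d}"
        show "normN \<alpha> (d - i) a * (\<alpha> ^^ (d - i)) (coeff s i) =
           (if i = e then normN \<alpha> (d - e) a * (\<alpha> ^^ (d - e)) (coeff s e) else 0)"
        proof (cases "i = e")
          case False
          then have "coeff s i = 0" using z e_def coeff_eq_0[of s i] by (cases "i < e") auto
          then show ?thesis using False by (simp add: alp_zero)
        qed simp
      qed
      then have "normN \<alpha> (d - e) a * (\<alpha>^^(d - e)) (coeff s e) = 0" using d e_def by simp
      then show False using K_zero lc by blast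
    qed
    then obtain i where i: "i < e" "coeff s i \<noteq> 0" by blast
    define Z where "Z = {z. \<forall>r. z * ((\<alpha>^^e) r - (\<alpha>^^i) r) = 0}"
    have ZI: "r_ideal Z" unfolding r_ideal_def
    proof (intro conjI ballI allI)
      show "0 \<in> Z" unfolding Z_def by simp
    next
      fix x y assume "x \<in> Z" "y \<in> Z" then show "x + y \<in> Z" unfolding Z_def by (simp add: distrib_right)
    next
      fix x assume "x \<in> Z" then show "- x \<in> Z" unfolding Z_def by simp
    next
      fix r x assume "x \<in> Z" then show "r * x \<in> Z" unfolding Z_def by (simp add: mult.assoc)
    qed
    have allal: "(\<forall>r. P r) \<longleftrightarrow> (\<forall>r. P (\<alpha> r))" for P
    proof
      assume "\<forall>r. P (\<alpha> r)"
      show "\<forall>r. P r"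
      proof
        fix r obtain r' where "r = \<alpha> r'" using al_bij by (metis bij_pointE)
        then show "P r" using \<open>\<forall>r. P (\<alpha> r)\<close> by simp
      qed
    qed simp
    have al0: "\<alpha> x = 0 \<longleftrightarrow> x = 0" for x using alp_inj[of 1 x 0] al_zero by simp
    have Zal: "\<alpha> z \<in> Z \<longleftrightarrow> z \<in> Z" for z
    proof -
      have 1: "\<alpha> z * ((\<alpha>^^e) (\<alpha> r) - (\<alpha>^^i) (\<alpha> r)) = \<alpha> (z * ((\<alpha>^^e) r - (\<alpha>^^i) r))" for r
        by (simp add: al_mult al_diff funpow_swap1)
      have "\<alpha> z \<in> Z \<longleftrightarrow> (\<forall>r. \<alpha> z * ((\<alpha>^^e) r - (\<alpha>^^i) r) = 0)" by (simp add: Z_def)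
      also have "\<dots> \<longleftrightarrow> (\<forall>r. \<alpha> z * ((\<alpha>^^e) (\<alpha> r) - (\<alpha>^^i) (\<alpha> r)) = 0)"
        by (rule allal)
      also have "\<dots> \<longleftrightarrow> (\<forall>r. z * ((\<alpha>^^e) r - (\<alpha>^^i) r) = 0)" by (simp only: 1 al0)
      also have "\<dots> \<longleftrightarrow> z \<in> Z" by (simp add: Z_def)
      finally show ?thesis .
    qed
    have "alpha_stable \<alpha> Z" unfolding alpha_stable_def
    proof
      show "\<alpha> ` Z \<subseteq> Z" using Zal by blast
      show "Z \<subseteq> \<alpha> ` Z"
      proof
        fix z assume "z \<in> Z"
        obtain w where w: "z = \<alpha> w" using al_bij by (metis bij_pointE)
        then have "w \<in> Z" using Zal \<open>z \<in> Z\<close> by blast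
        then show "z \<in> \<alpha> ` Z" using w by blast
      qed
    qed
    moreover have "Z \<noteq> {0}" using rel[of i] i(2) unfolding Z_def by auto
    ultimately obtain n where "normN \<alpha> n a \<in> Z" using special[OF ZI] by blast
    then have "normN \<alpha> n a * ((\<alpha>^^e) r - (\<alpha>^^i) r) = 0" for r unfolding Z_def by blast
    then have eq: "(\<alpha>^^e) r = (\<alpha>^^i) r" for r using normN_reg by fastforce
    have "\<alpha>^^(e - i) = id"
    proof
      fix x
      have "(\<alpha>^^i) ((\<alpha>^^(e - i)) x) = (\<alpha>^^e) x" using i(1) by (simp add: alp_comp)
      then have "(\<alpha>^^i) ((\<alpha>^^(e - i)) x) = (\<alpha>^^i) x" using eq by simp
      then show "(\<alpha>^^(e - i)) x = id x" using alp_inj by simp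
    qed
    then show False using inf i(1) by auto
  qed
  fix s assume H: "\<forall>C\<in>quot_mod M. quot_act \<alpha> M C s = M"
  have "s \<in> A" unfolding A_def
  proof (rule CollectI, rule allI)
    fix f
    have "quot_act \<alpha> M (coset M f) s = M" using H unfolding quot_mod_def by blast
    then show "skew_mult \<alpha> f s \<in> M" using coset_eq_J[OF M_ri] by (simp add: quot_act_coset[OF M_ri])
  qed
  then show "s = 0" using A0 by blast
qed

end

theorem proposition4p3:
  fixes \<alpha> :: "'a::comm_ring_1 \<Rightarrow> 'a" and a :: 'a
  assumes "noetherian_ring TYPE('a)"
    and "ring_automorphism \<alpha>"
    and "alpha_special_element \<alpha> a"
  shows "maximal_right_ideal \<alpha> (principal_right_ideal \<alpha> (1 - smult a theta)) \<and>
         ((\<forall>n>0. \<alpha> ^^ n \<noteq> id) \<longrightarrow>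
           quot_simple \<alpha> (principal_right_ideal \<alpha> (1 - smult a theta)) \<and>
           quot_faithful \<alpha> (principal_right_ideal \<alpha> (1 - smult a theta)))"
proof -
  interpret spec \<alpha> a
    by (rule spec.intro[OF aut.intro]) (use assms in \<open>simp_all add: spec_axioms_def\<close>)
  show ?thesis using M_maximal M_simple M_faithful by blast
qed

end
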